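(* Let $n\in\mathbb{N}_0\cup\{\infty\}$. If $n=0$, let $U=X$ be a topological space; if $n\ge 1$, let $X$ be a locally convex space over $\mathbb{K}$ and $U\subseteq X$ an open subset. Let $E_1,E_2,F$ be locally convex spaces, $\beta\colon E_1\times E_2\to F$ a bilinear map and $f\colon U\to E_1\times E_2$ a $C^n_{\mathbb{K}}$-map (for $n=0$: a continuous map). Assume that at least one of the following holds: (a) $X$ is metrizable and $\beta$ is sequentially continuous; or (b) $X$ is a $k^\infty$-space and $\beta$ is hypocontinuous in the second argument with respect to a set $\mathcal{S}$ of bounded subsets of $E_2$ which contains all compact subsets of $E_2$. Then $\beta\circ f\colon U\to F$ is $C^n_{\mathbb{K}}$.
   Context: $\mathbb{K}\in\{\mathbb{R},\mathbb{C}\}$; spaces serving as domain or range of differentiable maps are Hausdorff. Keller's $C^n$-maps: for $U\subseteq E$ open, $f\colon U\to F$ is $C^0_{\mathbb{K}}$ if continuous; $C^1_{\mathbb{K}}$ if continuous, the limit $df(x,y)=\lim_{t\to0}\frac{f(x+ty)-f(x)}{t}$ ($0\ne t\in\mathbb{K}$) exists for all $x\in U$, $y\in E$, and $df\colon U\times E\to F$ is continuous; $C^{n+1}_{\mathbb{K}}$ if $C^1_{\mathbb{K}}$ and $df$ is $C^n_{\mathbb{K}}$; $C^\infty_{\mathbb{K}}$ if $C^n_{\mathbb{K}}$ for all $n$. A Hausdorff space $X$ is a $k$-space if a subset $A\subseteq X$ is closed whenever $A\cap K$ is closed in $K$ for all compact $K\subseteq X$; $X$ is a $k^\infty$-space if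 it is Hausdorff and $X^n$ is a $k$-space for every $n\in\mathbb{N}$. A bilinear $\beta$ is hypocontinuous in the second argument with respect to $\mathcal{S}$ if it is separately continuous and for each $M\in\mathcal{S}$ and $0$-neighbourhood $W\subseteq F$ there is a $0$-neighbourhood $V\subseteq E_1$ with $\beta(V\times M)\subseteq W$. *)

theory Defs
  imports "HOL-Analysis.Analysis"
begin

(* The scalar field K is modelled by a type 'k :: real_normed_field (R or C);
   a K-vector space structure on a type 'a :: ab_group_add is given by an explicit
   scalar multiplication 's :: 'k \<Rightarrow> 'a \<Rightarrow> 'a', the topology is the
   type-class topology. *)

definition convex_K :: "('k::real_normed_field \<Rightarrow> 'a::ab_group_add \<Rightarrow> 'a) \<Rightarrow> 'a set \<Rightarrow> bool" where
  "convex_K s V \<longleftrightarrow>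
     (\<forall>x\<in>V. \<forall>y\<in>V. \<forall>t::real. 0 \<le> t \<and> t \<le> 1 \<longrightarrow> s (of_real t) x + s (of_real (1 - t)) y \<in> V)"

definition lcs :: "('k::real_normed_field \<Rightarrow> 'a::{ab_group_add,t2_space} \<Rightarrow> 'a) \<Rightarrow> bool" where
  "lcs s \<longleftrightarrow> vector_space s
     \<and> continuous_on UNIV (\<lambda>(x::'a, y::'a). x + y)
     \<and> continuous_on UNIV (\<lambda>(c::'k, x::'a). s c x)
     \<and> (\<forall>W. open W \<and> (0::'a) \<in> W \<longrightarrow> (\<exists>V. open V \<and> 0 \<in> V \<and> V \<subseteq> W \<and> convex_K s V))"

definition bounded_K :: "('k::real_normed_field \<Rightarrow> 'a::{ab_group_add,topological_space} \<Rightarrow> 'a) \<Rightarrow> 'a set \<Rightarrow> bool" where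
  "bounded_K s M \<longleftrightarrow>
     (\<forall>W. open W \<and> (0::'a) \<in> W \<longrightarrow> (\<exists>r>0. \<forall>t::'k. norm t \<ge> r \<longrightarrow> M \<subseteq> s t ` W))"

definition bilinear_K ::
  "('k::real_normed_field \<Rightarrow> 'e1::ab_group_add \<Rightarrow> 'e1) \<Rightarrow> ('k \<Rightarrow> 'e2::ab_group_add \<Rightarrow> 'e2)
     \<Rightarrow> ('k \<Rightarrow> 'f::ab_group_add \<Rightarrow> 'f) \<Rightarrow> ('e1 \<Rightarrow> 'e2 \<Rightarrow> 'f) \<Rightarrow> bool" where
  "bilinear_K s1 s2 sF \<beta> \<longleftrightarrow>
     (\<forall>b. Vector_Spaces.linear s1 sF (\<lambda>a. \<beta> a b)) \<and> (\<forall>a. Vector_Spaces.linear s2 sF (\<beta> a))"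

definition seq_continuous2 :: "('e1::topological_space \<Rightarrow> 'e2::topological_space \<Rightarrow> 'f::topological_space) \<Rightarrow> bool" where
  "seq_continuous2 \<beta> \<longleftrightarrow>
     (\<forall>(z::nat \<Rightarrow> 'e1 \<times> 'e2) p. z \<longlonglongrightarrow> p \<longrightarrow>
        (\<lambda>k. \<beta> (fst (z k)) (snd (z k))) \<longlonglongrightarrow> \<beta> (fst p) (snd p))"

definition hypocontinuous2 ::
  "('e1::{zero,topological_space} \<Rightarrow> 'e2::topological_space \<Rightarrow> 'f::{zero,topological_space}) \<Rightarrow> 'e2 set set \<Rightarrow> bool" where
  "hypocontinuous2 \<beta> S \<longleftrightarrow>
     (\<forall>b. continuous_on UNIV (\<lambda>a. \<beta> a b)) \<and> (\<forall>a. continuous_on UNIV (\<beta> a))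
     \<and> (\<forall>M\<in>S. \<forall>W. open W \<and> (0::'f) \<in> W \<longrightarrow>
            (\<exists>V. open V \<and> (0::'e1) \<in> V \<and> (\<forall>a\<in>V. \<forall>b\<in>M. \<beta> a b \<in> W)))"

definition k_inf_space :: "'a topology \<Rightarrow> bool" where
  "k_inf_space X \<longleftrightarrow> Hausdorff_space X
     \<and> (\<forall>n::nat. k_space (product_topology (\<lambda>i. X) {..<n}))"

(* Since the recursive definition changes the domain
   (f on U \<subseteq> X, df on U \<times> X, d(df) on (U \<times> X) \<times> (X \<times> X), ...), all
   domains are represented inside the finite powers X^m, realised as
   extensional functions nat \<Rightarrow> 'x on {..<m} with the product topology;
   a pair (p,q) \<in> X^m \<times> X^m is identified with its concatenation in X^(2m).
   ------------------------------------------------------------------------ *)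

definition Xpow :: "nat \<Rightarrow> (nat \<Rightarrow> 'x::topological_space) topology" where
  "Xpow m = product_topology (\<lambda>i. euclidean) {..<m}"

definition padd :: "nat \<Rightarrow> (nat \<Rightarrow> 'x::plus) \<Rightarrow> (nat \<Rightarrow> 'x) \<Rightarrow> (nat \<Rightarrow> 'x)" where
  "padd m p q = restrict (\<lambda>i. p i + q i) {..<m}"

definition pscale :: "('k \<Rightarrow> 'x \<Rightarrow> 'x) \<Rightarrow> nat \<Rightarrow> 'k \<Rightarrow> (nat \<Rightarrow> 'x) \<Rightarrow> (nat \<Rightarrow> 'x)" where
  "pscale sX m t q = restrict (\<lambda>i. sX t (q i)) {..<m}"

definition fst_part :: "nat \<Rightarrow> (nat \<Rightarrow> 'x) \<Rightarrow> (nat \<Rightarrow> 'x)" where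
  "fst_part m r = restrict r {..<m}"

definition snd_part :: "nat \<Rightarrow> (nat \<Rightarrow> 'x) \<Rightarrow> (nat \<Rightarrow> 'x)" where
  "snd_part m r = restrict (\<lambda>i. r (i + m)) {..<m}"

definition dom_d :: "nat \<Rightarrow> (nat \<Rightarrow> 'x::topological_space) set \<Rightarrow> (nat \<Rightarrow> 'x) set" where
  "dom_d m V = {r \<in> topspace (Xpow (2 * m)). fst_part m r \<in> V}"

definition diffq ::
  "('k::real_normed_field \<Rightarrow> 'x::plus \<Rightarrow> 'x) \<Rightarrow> ('k \<Rightarrow> 'f::minus \<Rightarrow> 'f) \<Rightarrow> nat
     \<Rightarrow> ((nat \<Rightarrow> 'x) \<Rightarrow> 'f) \<Rightarrow> (nat \<Rightarrow> 'x) \<Rightarrow> (nat \<Rightarrow> 'x) \<Rightarrow> 'k \<Rightarrow> 'f" where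
  "diffq sX sF m g p q t = sF (inverse t) (g (padd m p (pscale sX m t q)) - g p)"

definition dd ::
  "('k::real_normed_field \<Rightarrow> 'x::plus \<Rightarrow> 'x) \<Rightarrow> ('k \<Rightarrow> 'f::{minus,t2_space} \<Rightarrow> 'f) \<Rightarrow> nat
     \<Rightarrow> ((nat \<Rightarrow> 'x) \<Rightarrow> 'f) \<Rightarrow> (nat \<Rightarrow> 'x) \<Rightarrow> 'f" where
  "dd sX sF m g r = Lim (at 0) (diffq sX sF m g (fst_part m r) (snd_part m r))"

definition C1_K ::
  "('k::real_normed_field \<Rightarrow> 'x::{ab_group_add,topological_space} \<Rightarrow> 'x) \<Rightarrow> ('k \<Rightarrow> 'f::{ab_group_add,t2_space} \<Rightarrow> 'f)
     \<Rightarrow> nat \<Rightarrow> (nat \<Rightarrow> 'x) set \<Rightarrow> ((nat \<Rightarrow> 'x) \<Rightarrow> 'f) \<Rightarrow> bool" where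
  "C1_K sX sF m V g \<longleftrightarrow>
     continuous_map (subtopology (Xpow m) V) euclidean g
     \<and> (\<forall>p\<in>V. \<forall>q\<in>topspace (Xpow m). \<exists>l. (diffq sX sF m g p q \<longlongrightarrow> l) (at 0))
     \<and> continuous_map (subtopology (Xpow (2 * m)) (dom_d m V)) euclidean (dd sX sF m g)"

fun Cnat_K ::
  "('k::real_normed_field \<Rightarrow> 'x::{ab_group_add,topological_space} \<Rightarrow> 'x) \<Rightarrow> ('k \<Rightarrow> 'f::{ab_group_add,t2_space} \<Rightarrow> 'f)
     \<Rightarrow> nat \<Rightarrow> nat \<Rightarrow> (nat \<Rightarrow> 'x) set \<Rightarrow> ((nat \<Rightarrow> 'x) \<Rightarrow> 'f) \<Rightarrow> bool" where
  "Cnat_K sX sF 0 m V g = continuous_map (subtopology (Xpow m) V) euclidean g"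
| "Cnat_K sX sF (Suc k) m V g =
     (C1_K sX sF m V g \<and> Cnat_K sX sF k (2 * m) (dom_d m V) (dd sX sF m g))"

definition emb1 :: "'x set \<Rightarrow> (nat \<Rightarrow> 'x) set" where
  "emb1 U = {p \<in> PiE {..<1} (\<lambda>_. UNIV). p 0 \<in> U}"

definition Cn_K ::
  "('k::real_normed_field \<Rightarrow> 'x::{ab_group_add,topological_space} \<Rightarrow> 'x) \<Rightarrow> ('k \<Rightarrow> 'f::{ab_group_add,t2_space} \<Rightarrow> 'f)
     \<Rightarrow> enat \<Rightarrow> 'x set \<Rightarrow> ('x \<Rightarrow> 'f) \<Rightarrow> bool" where
  "Cn_K sX sF n U f \<longleftrightarrow> open U \<and>
     (case n of enat k \<Rightarrow> Cnat_K sX sF k 1 (emb1 U) (\<lambda>p. f (p 0))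
              | \<infinity> \<Rightarrow> (\<forall>k. Cnat_K sX sF k 1 (emb1 U) (\<lambda>p. f (p 0))))"

definition prod_scale :: "('k \<Rightarrow> 'a \<Rightarrow> 'a) \<Rightarrow> ('k \<Rightarrow> 'b \<Rightarrow> 'b) \<Rightarrow> 'k \<Rightarrow> 'a \<times> 'b \<Rightarrow> 'a \<times> 'b" where
  "prod_scale s1 s2 c z = (s1 c (fst z), s2 c (snd z))"

end

theory Submission
  imports Defs
begin

lemma op2_tendsto:
  fixes op :: "'a::t2_space \<Rightarrow> 'b::t2_space \<Rightarrow> 'c::topological_space"
  assumes c: "continuous_on UNIV (\<lambda>(x, y). op x y)"
    and f: "(f \<longlongrightarrow> a) F" and g: "(g \<longlongrightarrow> b) F"
  shows "((\<lambda>i. op (f i) (g i)) \<longlongrightarrow> op a b) F"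
proof -
  have "isCont (\<lambda>(x, y). op x y) (a, b)"
    using c by (simp add: continuous_on_eq_continuous_at)
  from isCont_tendsto_compose[OF this tendsto_Pair[OF f g]] show ?thesis by simp
qed

lemma op2_cmap:
  assumes c: "continuous_on UNIV (\<lambda>(x, y). op x y)"
    and f: "continuous_map Y euclidean f" and g: "continuous_map Y euclidean g"
  shows "continuous_map Y euclidean (\<lambda>i. op (f i) (g i))"
proof -
  have "continuous_map Y (prod_topology euclidean euclidean) (\<lambda>i. (f i, g i))"
    using f g by (rule continuous_map_pairedI)
  then have p: "continuous_map Y euclidean (\<lambda>i. (f i, g i))" by simp
  have "continuous_map euclidean euclidean (\<lambda>(x, y). op x y)"
    using c by (metis continuous_map_iff_continuous subtopology_UNIV)
  from continuous_map_compose[OF p this] show ?thesis by (simp add: o_def)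
qed

lemma op1_cmap:
  assumes c: "continuous_on UNIV h"
    and f: "continuous_map Y euclidean f"
  shows "continuous_map Y euclidean (\<lambda>i. h (f i))"
proof -
  have "continuous_map euclidean euclidean h"
    using c by (metis continuous_map_iff_continuous subtopology_UNIV)
  from continuous_map_compose[OF f this] show ?thesis by (simp add: o_def)
qed

lemma Lim_at0:
  assumes "(f \<longlongrightarrow> l) (at (0::'k::real_normed_field))"
  shows "Lim (at 0) f = l"
  using assms by (intro tendsto_Lim) auto

lemma lcs_vs: "lcs s \<Longrightarrow> vector_space s" by (simp add: lcs_def)

lemma lcs_add:
  fixes s :: "'k::real_normed_field \<Rightarrow> 'a::{ab_group_add,t2_space} \<Rightarrow> 'a"
  shows "lcs s \<Longrightarrow> continuous_on UNIV (\<lambda>(x, y::'a). x + y)" by (simp add: lcs_def)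
lemma lcs_scale: "lcs s \<Longrightarrow> continuous_on UNIV (\<lambda>(c, x). s c x)" by (simp add: lcs_def)

lemma lcs_diff:
  assumes "lcs (s :: 'k::real_normed_field \<Rightarrow> 'a::{ab_group_add,t2_space} \<Rightarrow> 'a)"
  shows "continuous_on UNIV (\<lambda>(x, y::'a). x - y)"
proof -
  interpret vector_space s using lcs_vs[OF assms] .
  have e: "(\<lambda>(x, y::'a). x - y) = (\<lambda>z. (\<lambda>(x, y). x + y) (fst z, (\<lambda>(c, x). s c x) (-1, snd z)))"
    by (auto simp: fun_eq_iff scale_minus_left)
  have c1: "continuous_on UNIV (\<lambda>(c, x). s c x)" using lcs_scale[OF assms] .
  have c2: "continuous_on UNIV (\<lambda>(x, y). x + y::'a)" using lcs_add[OF assms] .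
  have "continuous_on UNIV (\<lambda>z::'a\<times>'a. (-1::'k, snd z))"
    by (intro continuous_intros)
  then have "continuous_on UNIV (\<lambda>z::'a\<times>'a. (\<lambda>(c, x). s c x) (-1, snd z))"
    using continuous_on_compose[of UNIV "\<lambda>z::'a\<times>'a. (-1::'k, snd z)" "\<lambda>(c, x). s c x"] c1
    by (simp add: o_def continuous_on_subset)
  then have "continuous_on UNIV (\<lambda>z::'a\<times>'a. (fst z, (\<lambda>(c, x). s c x) (-1, snd z)))"
    by (intro continuous_intros)
  then have "continuous_on UNIV (\<lambda>z. (\<lambda>(x, y). x + y) (fst z, (\<lambda>(c, x). s c x) (-1::'k, snd z)))"
    using continuous_on_compose[of UNIV "\<lambda>z::'a\<times>'a. (fst z, (\<lambda>(c, x). s c x) (-1::'k, snd z))" "\<lambda>(x, y). x + y"] c2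
    by (simp add: o_def continuous_on_subset)
  then show ?thesis using e by simp
qed

lemma topspace_Xpow: "topspace (Xpow m) = PiE {..<m} (\<lambda>_. UNIV)"
  by (simp add: Xpow_def)

definition sel :: "nat \<Rightarrow> (nat \<Rightarrow> nat) \<Rightarrow> (nat \<Rightarrow> 'x) \<Rightarrow> (nat \<Rightarrow> 'x)" where
  "sel m \<sigma> r = restrict (\<lambda>i. r (\<sigma> i)) {..<m}"

lemma sel_topspace: "sel m \<sigma> r \<in> topspace (Xpow m)"
  by (simp add: topspace_Xpow sel_def)

lemma fst_part_sel: "fst_part m = sel m (\<lambda>i. i)"
  by (simp add: fun_eq_iff fst_part_def sel_def)

lemma snd_part_sel: "snd_part m = sel m (\<lambda>i. i + m)"
  by (simp add: fun_eq_iff snd_part_def sel_def)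

lemma sel_cmap:
  assumes "\<And>i. i < m \<Longrightarrow> \<sigma> i < m'"
  shows "continuous_map (Xpow m') (Xpow (m::nat)) (sel m \<sigma> :: (nat \<Rightarrow> 'x::topological_space) \<Rightarrow> _)"
  unfolding Xpow_def
proof (subst continuous_map_componentwise, intro conjI ballI)
  show "sel m \<sigma> ` topspace (product_topology (\<lambda>i. euclidean) {..<m'}) \<subseteq> extensional {..<m}"
    by (auto simp: sel_def)
  fix k assume k: "k \<in> {..<m}"
  have e: "(\<lambda>x::nat\<Rightarrow>'x. sel m \<sigma> x k) = (\<lambda>x. x (\<sigma> k))" using k by (auto simp: sel_def)
  show "continuous_map (product_topology (\<lambda>i. euclidean) {..<m'}) euclidean (\<lambda>x::nat\<Rightarrow>'x. sel m \<sigma> x k)"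
    unfolding e using assms k by (intro continuous_map_product_projection) auto
qed

lemma fst_part_topspace: "r \<in> topspace (Xpow (2*m)) \<Longrightarrow> fst_part m r \<in> topspace (Xpow m)"
  by (simp add: fst_part_sel sel_topspace)
lemma snd_part_topspace: "r \<in> topspace (Xpow (2*m)) \<Longrightarrow> snd_part m r \<in> topspace (Xpow m)"
  by (simp add: snd_part_sel sel_topspace)

lemma dom_d_open:
  assumes "openin (Xpow m) V"
  shows "openin (Xpow (2*m)) (dom_d m V :: (nat \<Rightarrow> 'x::topological_space) set)"
proof -
  have "continuous_map (Xpow (2*m)) (Xpow m) (fst_part m :: (nat \<Rightarrow> 'x) \<Rightarrow> _)"
    unfolding fst_part_sel by (rule sel_cmap) auto
  from openin_continuous_map_preimage[OF this assms] show ?thesis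
    by (simp add: dom_d_def)
qed

lemma dom_d_sub: "dom_d m V \<subseteq> topspace (Xpow (2*m))"
  by (auto simp: dom_d_def)

lemma cont_of_Cnat:
  "Cnat_K sX sF k m V g \<Longrightarrow> continuous_map (subtopology (Xpow m) V) euclidean g"
  by (cases k) (auto simp: C1_K_def)

lemma Cnat_Suc_mono:
  "Cnat_K sX sF (Suc k) m V g \<Longrightarrow> Cnat_K sX sF k m V g"
proof (induction k arbitrary: m V g)
  case 0 then show ?case by (simp add: C1_K_def)
next
  case (Suc k) then show ?case by auto
qed

lemma Cnat_Suc_iff:
  "Cnat_K sX sF (Suc k) m V g \<longleftrightarrow>
     continuous_map (subtopology (Xpow m) V) euclidean g
     \<and> (\<forall>p\<in>V. \<forall>q\<in>topspace (Xpow m). \<exists>l. (diffq sX sF m g p q \<longlongrightarrow> l) (at 0))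
     \<and> Cnat_K sX sF k (2 * m) (dom_d m V) (dd sX sF m g)"
  using cont_of_Cnat[of sX sF k "2*m" "dom_d m V" "dd sX sF m g"]
  by (auto simp: C1_K_def)

lemma padd_sel:
  assumes "\<And>i. i < m \<Longrightarrow> \<sigma> i < m'"
  shows "sel m \<sigma> (padd m' p (pscale sX m' t q)) = padd m (sel m \<sigma> p) (pscale sX m t (sel m \<sigma> q))"
  using assms by (auto simp: fun_eq_iff sel_def padd_def pscale_def)

lemma diffq_sel:
  assumes "\<And>i. i < m \<Longrightarrow> \<sigma> i < m'"
  shows "diffq sX sF m' (\<lambda>r. h (sel m \<sigma> r)) p q = diffq sX sF m h (sel m \<sigma> p) (sel m \<sigma> q)"
  by (simp add: fun_eq_iff diffq_def padd_sel[OF assms])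

lemma dd_sel:
  assumes "\<And>i. i < m \<Longrightarrow> \<sigma> i < m'"
  defines "\<sigma>' \<equiv> (\<lambda>i. if i < m then \<sigma> i else \<sigma> (i - m) + m')"
  shows "dd sX sF m' (\<lambda>r. h (sel m \<sigma> r)) r = dd sX sF m h (sel (2*m) \<sigma>' r)"
proof -
  have f: "fst_part m (sel (2*m) \<sigma>' r) = sel m \<sigma> (fst_part m' r)"
    using assms by (auto simp: fun_eq_iff sel_def fst_part_def \<sigma>'_def)
  have s: "snd_part m (sel (2*m) \<sigma>' r) = sel m \<sigma> (snd_part m' r)"
    using assms by (auto simp: fun_eq_iff sel_def snd_part_def \<sigma>'_def)
  show ?thesis unfolding dd_def f s by (rule arg_cong[where f="Lim (at 0)"], rule diffq_sel[OF assms(1)])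
qed

lemma Cnat_sel:
  fixes h :: "(nat \<Rightarrow> 'x::{ab_group_add,topological_space}) \<Rightarrow> 'f::{ab_group_add,t2_space}"
  assumes "\<And>i. i < m \<Longrightarrow> \<sigma> i < m'"
    and "sel m \<sigma> ` W \<subseteq> V" and "W \<subseteq> topspace (Xpow m')"
    and "Cnat_K sX sF k m V h"
  shows "Cnat_K sX sF k m' W (\<lambda>r. h (sel m \<sigma> r))"
  using assms
proof (induction k arbitrary: m m' \<sigma> V W h)
  case 0
  have c1: "continuous_map (subtopology (Xpow m') W) (subtopology (Xpow m) V) (sel m \<sigma>)"
    using 0 by (intro continuous_map_into_subtopology continuous_map_from_subtopology sel_cmap) auto
  from continuous_map_compose[OF c1 0(4)[simplified]] show ?case by (simp add: o_def)
next
  case (Suc k)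
  have c1: "continuous_map (subtopology (Xpow m') W) (subtopology (Xpow m) V) (sel m \<sigma>)"
    using Suc by (intro continuous_map_into_subtopology continuous_map_from_subtopology sel_cmap) auto
  have hS: "continuous_map (subtopology (Xpow m) V) euclidean h
     \<and> (\<forall>p\<in>V. \<forall>q\<in>topspace (Xpow m). \<exists>l. (diffq sX sF m h p q \<longlongrightarrow> l) (at 0))
     \<and> Cnat_K sX sF k (2 * m) (dom_d m V) (dd sX sF m h)"
    using Suc.prems(4)[unfolded Cnat_Suc_iff] .
  define \<sigma>' where "\<sigma>' \<equiv> (\<lambda>i. if i < m then \<sigma> i else \<sigma> (i - m) + m')"
  have b': "\<sigma>' i < 2*m'" if i: "i < 2*m" for i
  proof (cases "i<m")
    case True then show ?thesis using Suc.prems(1)[of i] by (simp add: \<sigma>'_def)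
  next
    case False then have "i - m < m" using i by simp
    then show ?thesis using Suc.prems(1)[of "i-m"] False by (simp add: \<sigma>'_def)
  qed
  have ddeq: "dd sX sF m' (\<lambda>r. h (sel m \<sigma> r)) = (\<lambda>r. dd sX sF m h (sel (2*m) \<sigma>' r))"
    unfolding \<sigma>'_def by (rule ext, rule dd_sel[of m \<sigma> m', OF Suc.prems(1)])
  have im: "sel (2*m) \<sigma>' ` dom_d m' W \<subseteq> dom_d m V"
  proof
    fix y assume "y \<in> sel (2*m) \<sigma>' ` dom_d m' W"
    then obtain r where r: "r \<in> dom_d m' W" and y: "y = sel (2*m) \<sigma>' r" by auto
    have "fst_part m (sel (2*m) \<sigma>' r) = sel m \<sigma> (fst_part m' r)"
      using Suc.prems(1) by (auto simp: fun_eq_iff sel_def fst_part_def \<sigma>'_def)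
    then show "y \<in> dom_d m V" using r y Suc.prems(2) by (auto simp: dom_d_def sel_topspace)
  qed
  have "Cnat_K sX sF k (2*m') (dom_d m' W) (\<lambda>r. dd sX sF m h (sel (2*m) \<sigma>' r))"
    using Suc.IH[OF b' im dom_d_sub] hS by blast
  moreover have "continuous_map (subtopology (Xpow m') W) euclidean (\<lambda>r. h (sel m \<sigma> r))"
    using continuous_map_compose[OF c1 conjunct1[OF hS]] by (simp add: o_def)
  moreover have "\<forall>p\<in>W. \<forall>q\<in>topspace (Xpow m' :: (nat \<Rightarrow> 'x) topology). \<exists>l. (diffq sX sF m' (\<lambda>r. h (sel m \<sigma> r)) p q \<longlongrightarrow> l) (at 0)"
  proof (intro ballI)
    fix p q assume p: "p \<in> W" and q: "q \<in> topspace (Xpow m' :: (nat \<Rightarrow> 'x) topology)"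
    have e: "diffq sX sF m' (\<lambda>r. h (sel m \<sigma> r)) p q = diffq sX sF m h (sel m \<sigma> p) (sel m \<sigma> q)"
      by (rule diffq_sel[of m \<sigma> m'], rule Suc.prems(1))
    show "\<exists>l. (diffq sX sF m' (\<lambda>r. h (sel m \<sigma> r)) p q \<longlongrightarrow> l) (at 0)"
      unfolding e using hS Suc.prems(2) p by (auto simp: sel_topspace)
  qed
  ultimately show ?case unfolding Cnat_Suc_iff ddeq by blast
qed

lemma padd_limit:
  fixes sX :: "'k::real_normed_field \<Rightarrow> 'x::{ab_group_add,t2_space} \<Rightarrow> 'x"
  assumes X: "lcs sX" and p: "p \<in> topspace (Xpow m)" and q: "q \<in> topspace (Xpow m)"
  shows "limitin (Xpow m) (\<lambda>t. padd m p (pscale sX m t q)) p (at 0)"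
proof -
  interpret vector_space sX using lcs_vs[OF X] .
  have "((\<lambda>t. p i + sX t (q i)) \<longlongrightarrow> p i + sX 0 (q i)) (at 0)" for i
    by (intro op2_tendsto[OF lcs_add[OF X]] op2_tendsto[OF lcs_scale[OF X]] tendsto_const tendsto_ident_at)
  then have "((\<lambda>t. p i + sX t (q i)) \<longlongrightarrow> p i) (at 0)" for i by simp
  then show ?thesis using p q
    unfolding Xpow_def
    by (subst limitin_componentwise) (auto simp: padd_def pscale_def PiE_def)
qed

lemma eventually_padd_in:
  fixes sX :: "'k::real_normed_field \<Rightarrow> 'x::{ab_group_add,t2_space} \<Rightarrow> 'x"
  assumes X: "lcs sX" and V: "openin (Xpow m) V" and p: "p \<in> V" and q: "q \<in> topspace (Xpow m)"
  shows "eventually (\<lambda>t. padd m p (pscale sX m t q) \<in> V) (at 0)"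
proof -
  have pt: "p \<in> topspace (Xpow m)" using V p openin_subset by blast
  from padd_limit[OF X pt q] V p show ?thesis by (simp add: limitin_def)
qed

lemma Cnat_cong:
  fixes sX :: "'k::real_normed_field \<Rightarrow> 'x::{ab_group_add,t2_space} \<Rightarrow> 'x"
    and g :: "(nat \<Rightarrow> 'x) \<Rightarrow> 'f::{ab_group_add,t2_space}"
  assumes X: "lcs sX"
  shows "openin (Xpow m) V \<Longrightarrow> (\<And>p. p \<in> V \<Longrightarrow> g p = g' p) \<Longrightarrow> Cnat_K sX sF k m V g \<Longrightarrow> Cnat_K sX sF k m V g'"
proof (induction k arbitrary: m V g g')
  case 0
  then show ?case by (auto intro: continuous_map_eq)
next
  case (Suc k)
  have hS: "continuous_map (subtopology (Xpow m) V) euclidean g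
     \<and> (\<forall>p\<in>V. \<forall>q\<in>topspace (Xpow m). \<exists>l. (diffq sX sF m g p q \<longlongrightarrow> l) (at 0))
     \<and> Cnat_K sX sF k (2 * m) (dom_d m V) (dd sX sF m g)"
    using Suc.prems(3)[unfolded Cnat_Suc_iff] .
  have ev: "eventually (\<lambda>t. diffq sX sF m g p q t = diffq sX sF m g' p q t) (at 0)"
    if p: "p \<in> V" and q: "q \<in> topspace (Xpow m)" for p q
    using eventually_padd_in[OF X Suc.prems(1) p q]
    by eventually_elim (simp add: diffq_def Suc.prems(2) p)
  have lim: "\<exists>l. (diffq sX sF m g' p q \<longlongrightarrow> l) (at 0)"
    if p: "p \<in> V" and q: "q \<in> topspace (Xpow m)" for p q
    using hS p q tendsto_cong[OF ev[OF p q]] by blast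
  have ddeq: "dd sX sF m g r = dd sX sF m g' r" if r: "r \<in> dom_d m V" for r
  proof -
    have p: "fst_part m r \<in> V" and q: "snd_part m r \<in> topspace (Xpow m)"
      using r by (auto simp: dom_d_def snd_part_topspace)
    obtain l where l: "(diffq sX sF m g (fst_part m r) (snd_part m r) \<longlongrightarrow> l) (at 0)"
      using hS p q by blast
    then have l': "(diffq sX sF m g' (fst_part m r) (snd_part m r) \<longlongrightarrow> l) (at 0)"
      using tendsto_cong[OF ev[OF p q]] by blast
    show ?thesis unfolding dd_def Lim_at0[OF l] Lim_at0[OF l'] ..
  qed
  have "Cnat_K sX sF k (2 * m) (dom_d m V) (dd sX sF m g')"
    using Suc.IH[of "2*m" "dom_d m V" "dd sX sF m g" "dd sX sF m g'", OF dom_d_open[OF Suc.prems(1)] ddeq] hS by blast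
  moreover have "continuous_map (subtopology (Xpow m) V) euclidean g'"
    using hS Suc.prems(2) by (auto intro: continuous_map_eq)
  ultimately show ?case unfolding Cnat_Suc_iff using lim by blast
qed

lemma Cnat_add:
  fixes sX :: "'k::real_normed_field \<Rightarrow> 'x::{ab_group_add,t2_space} \<Rightarrow> 'x"
    and sF :: "'k \<Rightarrow> 'f::{ab_group_add,t2_space} \<Rightarrow> 'f"
    and g1 g2 :: "(nat \<Rightarrow> 'x) \<Rightarrow> 'f"
  assumes X: "lcs sX" and F: "lcs sF"
  shows "openin (Xpow m) V \<Longrightarrow> Cnat_K sX sF k m V g1 \<Longrightarrow> Cnat_K sX sF k m V g2
     \<Longrightarrow> Cnat_K sX sF k m V (\<lambda>p. g1 p + g2 p)"
proof (induction k arbitrary: m V g1 g2)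
  case 0
  then show ?case by (auto intro: op2_cmap[OF lcs_add[OF F]])
next
  case (Suc k)
  interpret vector_space sF using lcs_vs[OF F] .
  have h1: "continuous_map (subtopology (Xpow m) V) euclidean g1
     \<and> (\<forall>p\<in>V. \<forall>q\<in>topspace (Xpow m). \<exists>l. (diffq sX sF m g1 p q \<longlongrightarrow> l) (at 0))
     \<and> Cnat_K sX sF k (2 * m) (dom_d m V) (dd sX sF m g1)"
    using Suc.prems(2)[unfolded Cnat_Suc_iff] .
  have h2: "continuous_map (subtopology (Xpow m) V) euclidean g2
     \<and> (\<forall>p\<in>V. \<forall>q\<in>topspace (Xpow m). \<exists>l. (diffq sX sF m g2 p q \<longlongrightarrow> l) (at 0))
     \<and> Cnat_K sX sF k (2 * m) (dom_d m V) (dd sX sF m g2)"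
    using Suc.prems(3)[unfolded Cnat_Suc_iff] .
  have dq: "diffq sX sF m (\<lambda>p. g1 p + g2 p) p q = (\<lambda>t. diffq sX sF m g1 p q t + diffq sX sF m g2 p q t)" for p q
  proof
    fix t
    have "g1 (padd m p (pscale sX m t q)) + g2 (padd m p (pscale sX m t q)) - (g1 p + g2 p)
       = (g1 (padd m p (pscale sX m t q)) - g1 p) + (g2 (padd m p (pscale sX m t q)) - g2 p)"
      by (simp add: algebra_simps)
    then show "diffq sX sF m (\<lambda>p. g1 p + g2 p) p q t = diffq sX sF m g1 p q t + diffq sX sF m g2 p q t"
      unfolding diffq_def by (metis scale_right_distrib)
  qed
  have lim: "((diffq sX sF m (\<lambda>p. g1 p + g2 p) p q) \<longlongrightarrow> l1 + l2) (at 0)"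
    if "(diffq sX sF m g1 p q \<longlongrightarrow> l1) (at 0)" "(diffq sX sF m g2 p q \<longlongrightarrow> l2) (at 0)" for p q l1 l2
    unfolding dq using op2_tendsto[OF lcs_add[OF F] that] .
  have ddeq: "dd sX sF m g1 r + dd sX sF m g2 r = dd sX sF m (\<lambda>p. g1 p + g2 p) r" if r: "r \<in> dom_d m V" for r
  proof -
    have p: "fst_part m r \<in> V" and q: "snd_part m r \<in> topspace (Xpow m)"
      using r by (auto simp: dom_d_def snd_part_topspace)
    obtain l1 where l1: "(diffq sX sF m g1 (fst_part m r) (snd_part m r) \<longlongrightarrow> l1) (at 0)"
      using h1 p q by blast
    obtain l2 where l2: "(diffq sX sF m g2 (fst_part m r) (snd_part m r) \<longlongrightarrow> l2) (at 0)"
      using h2 p q by blast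
    show ?thesis unfolding dd_def Lim_at0[OF l1] Lim_at0[OF l2] Lim_at0[OF lim[OF l1 l2]] ..
  qed
  have "Cnat_K sX sF k (2 * m) (dom_d m V) (\<lambda>r. dd sX sF m g1 r + dd sX sF m g2 r)"
    using Suc.IH[OF dom_d_open[OF Suc.prems(1)]] h1 h2 by blast
  then have "Cnat_K sX sF k (2 * m) (dom_d m V) (dd sX sF m (\<lambda>p. g1 p + g2 p))"
    using Cnat_cong[OF X, of "2*m" "dom_d m V" "\<lambda>r. dd sX sF m g1 r + dd sX sF m g2 r", OF dom_d_open[OF Suc.prems(1)] ddeq]
    by blast
  moreover have "continuous_map (subtopology (Xpow m) V) euclidean (\<lambda>p. g1 p + g2 p)"
    using h1 h2 by (auto intro: op2_cmap[OF lcs_add[OF F]])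
  moreover have "\<forall>p\<in>V. \<forall>q\<in>topspace (Xpow m :: (nat \<Rightarrow> 'x) topology). \<exists>l. (diffq sX sF m (\<lambda>p. g1 p + g2 p) p q \<longlongrightarrow> l) (at 0)"
    using h1 h2 lim by blast
  ultimately show ?case unfolding Cnat_Suc_iff by blast
qed

lemma Cnat_proj:
  fixes sX :: "'k::real_normed_field \<Rightarrow> 'x::{ab_group_add,t2_space} \<Rightarrow> 'x"
    and s1 :: "'k \<Rightarrow> 'e1::{ab_group_add,t2_space} \<Rightarrow> 'e1"
    and s2 :: "'k \<Rightarrow> 'e2::{ab_group_add,t2_space} \<Rightarrow> 'e2"
    and g :: "(nat \<Rightarrow> 'x) \<Rightarrow> 'e1 \<times> 'e2"
  assumes X: "lcs sX"
  shows "openin (Xpow m) V \<Longrightarrow> Cnat_K sX (prod_scale s1 s2) k m V g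
     \<Longrightarrow> Cnat_K sX s1 k m V (\<lambda>p. fst (g p)) \<and> Cnat_K sX s2 k m V (\<lambda>p. snd (g p))"
proof (induction k arbitrary: m V g)
  case 0
  have "continuous_on UNIV (fst :: 'e1 \<times> 'e2 \<Rightarrow> _)" "continuous_on UNIV (snd :: 'e1 \<times> 'e2 \<Rightarrow> _)"
    by (intro continuous_intros)+
  then show ?case using 0 by (auto intro: op1_cmap)
next
  case (Suc k)
  have h: "continuous_map (subtopology (Xpow m) V) euclidean g
     \<and> (\<forall>p\<in>V. \<forall>q\<in>topspace (Xpow m). \<exists>l. (diffq sX (prod_scale s1 s2) m g p q \<longlongrightarrow> l) (at 0))
     \<and> Cnat_K sX (prod_scale s1 s2) k (2 * m) (dom_d m V) (dd sX (prod_scale s1 s2) m g)"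
    using Suc.prems(2)[unfolded Cnat_Suc_iff] .
  have dq: "diffq sX (prod_scale s1 s2) m g p q t = (diffq sX s1 m (\<lambda>p. fst (g p)) p q t, diffq sX s2 m (\<lambda>p. snd (g p)) p q t)" for p q t
    by (simp add: diffq_def prod_scale_def)
  have lim1: "(diffq sX s1 m (\<lambda>p. fst (g p)) p q \<longlongrightarrow> fst l) (at 0)"
    and lim2: "(diffq sX s2 m (\<lambda>p. snd (g p)) p q \<longlongrightarrow> snd l) (at 0)"
    if "(diffq sX (prod_scale s1 s2) m g p q \<longlongrightarrow> l) (at 0)" for p q l
    using tendsto_fst[OF that] tendsto_snd[OF that] by (simp_all add: dq)
  have ddeq: "fst (dd sX (prod_scale s1 s2) m g r) = dd sX s1 m (\<lambda>p. fst (g p)) r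
       \<and> snd (dd sX (prod_scale s1 s2) m g r) = dd sX s2 m (\<lambda>p. snd (g p)) r" if r: "r \<in> dom_d m V" for r
  proof -
    have p: "fst_part m r \<in> V" and q: "snd_part m r \<in> topspace (Xpow m)"
      using r by (auto simp: dom_d_def snd_part_topspace)
    obtain l where l: "(diffq sX (prod_scale s1 s2) m g (fst_part m r) (snd_part m r) \<longlongrightarrow> l) (at 0)"
      using h p q by blast
    show ?thesis unfolding dd_def Lim_at0[OF l] Lim_at0[OF lim1[OF l]] Lim_at0[OF lim2[OF l]] by simp
  qed
  have IH: "Cnat_K sX s1 k (2 * m) (dom_d m V) (\<lambda>r. fst (dd sX (prod_scale s1 s2) m g r))
     \<and> Cnat_K sX s2 k (2 * m) (dom_d m V) (\<lambda>r. snd (dd sX (prod_scale s1 s2) m g r))"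
    using Suc.IH[OF dom_d_open[OF Suc.prems(1)]] h by blast
  have d1: "Cnat_K sX s1 k (2 * m) (dom_d m V) (dd sX s1 m (\<lambda>p. fst (g p)))"
    using Cnat_cong[OF X, of "2*m" "dom_d m V" "\<lambda>r. fst (dd sX (prod_scale s1 s2) m g r)", OF dom_d_open[OF Suc.prems(1)]] IH ddeq
    by blast
  have d2: "Cnat_K sX s2 k (2 * m) (dom_d m V) (dd sX s2 m (\<lambda>p. snd (g p)))"
    using Cnat_cong[OF X, of "2*m" "dom_d m V" "\<lambda>r. snd (dd sX (prod_scale s1 s2) m g r)", OF dom_d_open[OF Suc.prems(1)]] IH ddeq
    by blast
  have cf: "continuous_on UNIV (fst :: 'e1 \<times> 'e2 \<Rightarrow> _)" "continuous_on UNIV (snd :: 'e1 \<times> 'e2 \<Rightarrow> _)"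
    by (intro continuous_intros)+
  have c: "continuous_map (subtopology (Xpow m) V) euclidean (\<lambda>p. fst (g p))"
          "continuous_map (subtopology (Xpow m) V) euclidean (\<lambda>p. snd (g p))"
    using h cf by (auto intro: op1_cmap)
  have "\<forall>p\<in>V. \<forall>q\<in>topspace (Xpow m :: (nat \<Rightarrow> 'x) topology). \<exists>l. (diffq sX s1 m (\<lambda>p. fst (g p)) p q \<longlongrightarrow> l) (at 0)"
       "\<forall>p\<in>V. \<forall>q\<in>topspace (Xpow m :: (nat \<Rightarrow> 'x) topology). \<exists>l. (diffq sX s2 m (\<lambda>p. snd (g p)) p q \<longlongrightarrow> l) (at 0)"
    using h lim1 lim2 by blast+
  then show ?case unfolding Cnat_Suc_iff using c d1 d2 by blast
qed

lemma SC_lim: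
  fixes \<beta> :: "'e1::topological_space \<Rightarrow> 'e2::topological_space \<Rightarrow> 'f::topological_space"
  assumes SC: "seq_continuous2 \<beta>"
    and a: "(a \<longlongrightarrow> a0) (at (0::'k::real_normed_field))" and b: "(b \<longlongrightarrow> b0) (at (0::'k))"
  shows "((\<lambda>t. \<beta> (a t) (b t)) \<longlongrightarrow> \<beta> a0 b0) (at (0::'k))"
  unfolding tendsto_at_iff_sequentially[where s=UNIV]
proof (intro allI impI)
  fix X :: "nat \<Rightarrow> 'k" assume X1: "\<forall>i. X i \<in> UNIV - {0}" and X2: "X \<longlonglongrightarrow> 0"
  have "(a \<circ> X) \<longlonglongrightarrow> a0" using a X1 X2 unfolding tendsto_at_iff_sequentially[where s=UNIV] by blast
  moreover have "(b \<circ> X) \<longlonglongrightarrow> b0" using b X1 X2 unfolding tendsto_at_iff_sequentially[where s=UNIV] by blast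
  ultimately have "(\<lambda>k. (a (X k), b (X k))) \<longlonglongrightarrow> (a0, b0)"
    by (intro tendsto_Pair) (simp_all add: o_def)
  then show "((\<lambda>t. \<beta> (a t) (b t)) \<circ> X) \<longlonglongrightarrow> \<beta> a0 b0"
  proof -
    have "(\<lambda>k. \<beta> (fst (a (X k), b (X k))) (snd (a (X k), b (X k)))) \<longlonglongrightarrow> \<beta> (fst (a0, b0)) (snd (a0, b0))"
      using SC[unfolded seq_continuous2_def, rule_format, OF \<open>(\<lambda>k. (a (X k), b (X k))) \<longlonglongrightarrow> (a0, b0)\<close>] .
    then show ?thesis by (simp add: o_def)
  qed
qed

locale bilin_setup =
  fixes s1 :: "'k::real_normed_field \<Rightarrow> 'e1::{ab_group_add,t2_space} \<Rightarrow> 'e1"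
    and s2 :: "'k \<Rightarrow> 'e2::{ab_group_add,t2_space} \<Rightarrow> 'e2"
    and sF :: "'k \<Rightarrow> 'f::{ab_group_add,t2_space} \<Rightarrow> 'f"
    and \<beta> :: "'e1 \<Rightarrow> 'e2 \<Rightarrow> 'f"
  assumes E1: "lcs s1" and E2: "lcs s2" and F: "lcs sF"
    and bil: "bilinear_K s1 s2 sF \<beta>"
begin

lemma mh1: "module_hom s1 sF (\<lambda>a. \<beta> a b)"
  using bil unfolding bilinear_K_def module_hom_iff_linear by blast
lemma mh2: "module_hom s2 sF (\<beta> a)"
  using bil unfolding bilinear_K_def module_hom_iff_linear by blast

lemma b_add1: "\<beta> (x + y) b = \<beta> x b + \<beta> y b"
  using module_hom.add[OF mh1] by simp
lemma b_add2: "\<beta> a (x + y) = \<beta> a x + \<beta> a y"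
  using module_hom.add[OF mh2] by simp
lemma b_sc1: "\<beta> (s1 c x) b = sF c (\<beta> x b)"
  using module_hom.scale[OF mh1] by simp
lemma b_sc2: "\<beta> a (s2 c x) = sF c (\<beta> a x)"
  using module_hom.scale[OF mh2] by simp
lemma b_diff1: "\<beta> (x - y) b = \<beta> x b - \<beta> y b"
  using b_add1[of "x - y" y b] by (simp add: eq_diff_eq)
lemma b_diff2: "\<beta> a (x - y) = \<beta> a x - \<beta> a y"
  using b_add2[of a "x - y" y] by (simp add: eq_diff_eq)

lemma diffq_bil:
  "diffq sX sF m (\<lambda>p. \<beta> (h1 p) (h2 p)) p q t =
     \<beta> (diffq sX s1 m h1 p q t) (h2 (padd m p (pscale sX m t q))) + \<beta> (h1 p) (diffq sX s2 m h2 p q t)"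
proof -
  interpret F: vector_space sF using lcs_vs[OF F] .
  define A where "A = h1 (padd m p (pscale sX m t q))"
  define B where "B = h2 (padd m p (pscale sX m t q))"
  have "\<beta> A B - \<beta> (h1 p) (h2 p) = \<beta> (A - h1 p) B + \<beta> (h1 p) (B - h2 p)"
    by (simp add: b_diff1 b_diff2)
  then show ?thesis
    unfolding diffq_def A_def[symmetric] B_def[symmetric] b_sc1 b_sc2
    by (simp only: F.scale_right_distrib)
qed

lemma B_expand:
  fixes t :: 'k
  assumes "t \<noteq> 0"
  shows "h2 (padd m p (pscale sX m t q)) = h2 p + s2 t (diffq sX s2 m h2 p q t)"
proof -
  interpret E2: vector_space s2 using lcs_vs[OF E2] .
  have "s2 t (s2 (inverse t) x) = x" for x
  proof -
    have "s2 t (s2 (inverse t) x) = s2 (t * inverse t) x" by (rule E2.scale_scale)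
    also have "t * inverse t = 1" using assms by simp
    finally show ?thesis by simp
  qed
  then show ?thesis unfolding diffq_def by simp
qed

lemma B_lim:
  fixes sX :: "'k \<Rightarrow> 'x::{ab_group_add,t2_space} \<Rightarrow> 'x"
  assumes "(diffq sX s2 m h2 p q \<longlongrightarrow> l2) (at 0)"
  shows "((\<lambda>t. h2 (padd m p (pscale sX m t q))) \<longlongrightarrow> h2 p) (at 0)"
proof -
  interpret E2: vector_space s2 using lcs_vs[OF E2] .
  have "((\<lambda>t. h2 p + s2 t (diffq sX s2 m h2 p q t)) \<longlongrightarrow> h2 p + s2 0 l2) (at 0)"
    by (rule op2_tendsto[OF lcs_add[OF E2] tendsto_const op2_tendsto[OF lcs_scale[OF E2] tendsto_ident_at assms]])
  then have "((\<lambda>t. h2 p + s2 t (diffq sX s2 m h2 p q t)) \<longlongrightarrow> h2 p) (at 0)" by simp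
  moreover have "eventually (\<lambda>t. h2 p + s2 t (diffq sX s2 m h2 p q t) = h2 (padd m p (pscale sX m t q))) (at (0::'k))"
  proof -
    have "eventually (\<lambda>t. t \<noteq> 0) (at (0::'k))" by (simp add: eventually_at_filter)
    then show ?thesis by eventually_elim (rule B_expand[symmetric])
  qed
  ultimately show ?thesis using tendsto_cong[of "\<lambda>t. h2 p + s2 t (diffq sX s2 m h2 p q t)" "\<lambda>t. h2 (padd m p (pscale sX m t q))" "at 0"] by simp
qed

lemma prod_rule:
  fixes sX :: "'k \<Rightarrow> 'x::{ab_group_add,t2_space} \<Rightarrow> 'x"
  assumes SC: "seq_continuous2 \<beta>"
    and l1: "(diffq sX s1 m h1 p q \<longlongrightarrow> l1) (at 0)" and l2: "(diffq sX s2 m h2 p q \<longlongrightarrow> l2) (at 0)"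
  shows "(diffq sX sF m (\<lambda>p. \<beta> (h1 p) (h2 p)) p q \<longlongrightarrow> \<beta> l1 (h2 p) + \<beta> (h1 p) l2) (at 0)"
  unfolding diffq_bil
  by (rule op2_tendsto[OF lcs_add[OF F] SC_lim[OF SC l1 B_lim[OF l2]] SC_lim[OF SC tendsto_const l2]])

end

context bilin_setup begin

lemma Cnat_bil:
  fixes sX :: "'k \<Rightarrow> 'x::{ab_group_add,t2_space} \<Rightarrow> 'x"
    and h1 :: "(nat \<Rightarrow> 'x) \<Rightarrow> 'e1" and h2 :: "(nat \<Rightarrow> 'x) \<Rightarrow> 'e2"
  assumes X: "lcs sX" and SC: "seq_continuous2 \<beta>"
    and CT: "\<And>m V (g1::(nat\<Rightarrow>'x)\<Rightarrow>'e1) (g2::(nat\<Rightarrow>'x)\<Rightarrow>'e2). openin (Xpow m) V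
        \<Longrightarrow> continuous_map (subtopology (Xpow m) V) euclidean g1
        \<Longrightarrow> continuous_map (subtopology (Xpow m) V) euclidean g2
        \<Longrightarrow> continuous_map (subtopology (Xpow m) V) euclidean (\<lambda>p. \<beta> (g1 p) (g2 p))"
  shows "openin (Xpow m) V \<Longrightarrow> Cnat_K sX s1 k m V h1 \<Longrightarrow> Cnat_K sX s2 k m V h2
     \<Longrightarrow> Cnat_K sX sF k m V (\<lambda>p. \<beta> (h1 p) (h2 p))"
proof (induction k arbitrary: m V h1 h2)
  case 0
  then show ?case using CT by simp
next
  case (Suc k)
  have H1: "continuous_map (subtopology (Xpow m) V) euclidean h1
     \<and> (\<forall>p\<in>V. \<forall>q\<in>topspace (Xpow m). \<exists>l. (diffq sX s1 m h1 p q \<longlongrightarrow> l) (at 0))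
     \<and> Cnat_K sX s1 k (2 * m) (dom_d m V) (dd sX s1 m h1)"
    using Suc.prems(2)[unfolded Cnat_Suc_iff] .
  have H2: "continuous_map (subtopology (Xpow m) V) euclidean h2
     \<and> (\<forall>p\<in>V. \<forall>q\<in>topspace (Xpow m). \<exists>l. (diffq sX s2 m h2 p q \<longlongrightarrow> l) (at 0))
     \<and> Cnat_K sX s2 k (2 * m) (dom_d m V) (dd sX s2 m h2)"
    using Suc.prems(3)[unfolded Cnat_Suc_iff] .
  have opn: "openin (Xpow (2*m)) (dom_d m V :: (nat \<Rightarrow> 'x) set)" using dom_d_open[OF Suc.prems(1)] .
  have lim: "\<exists>l. (diffq sX sF m (\<lambda>p. \<beta> (h1 p) (h2 p)) p q \<longlongrightarrow> l) (at 0)"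
    if p: "p \<in> V" and q: "q \<in> topspace (Xpow m :: (nat \<Rightarrow> 'x) topology)" for p q
  proof -
    obtain l1 where l1: "(diffq sX s1 m h1 p q \<longlongrightarrow> l1) (at 0)" using H1 p q by blast
    obtain l2 where l2: "(diffq sX s2 m h2 p q \<longlongrightarrow> l2) (at 0)" using H2 p q by blast
    show ?thesis using prod_rule[OF SC l1 l2] by blast
  qed
  define G where "G r = \<beta> (dd sX s1 m h1 r) (h2 (fst_part m r)) + \<beta> (h1 (fst_part m r)) (dd sX s2 m h2 r)" for r
  have ddeq: "G r = dd sX sF m (\<lambda>p. \<beta> (h1 p) (h2 p)) r" if r: "r \<in> dom_d m V" for r
  proof -
    have p: "fst_part m r \<in> V" and q: "snd_part m r \<in> topspace (Xpow m)"
      using r by (auto simp: dom_d_def snd_part_topspace)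
    obtain l1 where l1: "(diffq sX s1 m h1 (fst_part m r) (snd_part m r) \<longlongrightarrow> l1) (at 0)"
      using H1 p q by blast
    obtain l2 where l2: "(diffq sX s2 m h2 (fst_part m r) (snd_part m r) \<longlongrightarrow> l2) (at 0)"
      using H2 p q by blast
    show ?thesis unfolding G_def dd_def Lim_at0[OF l1] Lim_at0[OF l2] Lim_at0[OF prod_rule[OF SC l1 l2]] ..
  qed
  have selim: "sel m (\<lambda>i. i) ` dom_d m V \<subseteq> V"
    by (auto simp: dom_d_def fst_part_sel)
  have f2: "Cnat_K sX s2 k (2*m) (dom_d m V) (\<lambda>r. h2 (fst_part m r))"
    unfolding fst_part_sel
    by (rule Cnat_sel[OF _ selim dom_d_sub Cnat_Suc_mono[OF Suc.prems(3)]]) simp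
  have f1: "Cnat_K sX s1 k (2*m) (dom_d m V) (\<lambda>r. h1 (fst_part m r))"
    unfolding fst_part_sel
    by (rule Cnat_sel[OF _ selim dom_d_sub Cnat_Suc_mono[OF Suc.prems(2)]]) simp
  have G1: "Cnat_K sX sF k (2*m) (dom_d m V) (\<lambda>r. \<beta> (dd sX s1 m h1 r) (h2 (fst_part m r)))"
    using Suc.IH[OF opn _ f2] H1 by blast
  have G2: "Cnat_K sX sF k (2*m) (dom_d m V) (\<lambda>r. \<beta> (h1 (fst_part m r)) (dd sX s2 m h2 r))"
    using Suc.IH[OF opn f1] H2 by blast
  have "Cnat_K sX sF k (2*m) (dom_d m V) G"
    unfolding G_def by (rule Cnat_add[OF X F opn G1 G2])
  then have "Cnat_K sX sF k (2*m) (dom_d m V) (dd sX sF m (\<lambda>p. \<beta> (h1 p) (h2 p)))"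
    using Cnat_cong[OF X, of "2*m" "dom_d m V" G, OF opn ddeq] by blast
  moreover have "continuous_map (subtopology (Xpow m) V) euclidean (\<lambda>p. \<beta> (h1 p) (h2 p))"
    using CT[OF Suc.prems(1)] H1 H2 by blast
  ultimately show ?case unfolding Cnat_Suc_iff using lim by blast
qed

end

lemma seq_cont_map:
  assumes Y: "metrizable_space Y"
    and S: "\<And>\<sigma> l. range \<sigma> \<subseteq> topspace Y \<Longrightarrow> limitin Y \<sigma> l sequentially \<Longrightarrow> ((\<lambda>n. g (\<sigma> n)) \<longlongrightarrow> g l) sequentially"
  shows "continuous_map Y euclidean g"
proof -
  obtain M d where Md: "Metric_space M d" and Yeq: "Y = Metric_space.mtopology M d"
    using Y unfolding metrizable_space_def by blast
  interpret Metric_space M d using Md .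
  show ?thesis
    unfolding continuous_map_closedin
  proof (intro conjI allI impI)
    show "g \<in> topspace Y \<rightarrow> topspace euclidean" by simp
    fix C :: "'b set" assume "closedin euclidean C"
    then have C: "closed C" using closed_closedin by blast
    show "closedin Y {x \<in> topspace Y. g x \<in> C}"
      unfolding Yeq metric_closedin_iff_sequentially_closed
    proof (intro conjI allI impI)
      show "{x \<in> topspace mtopology. g x \<in> C} \<subseteq> M" by auto
      fix \<sigma> l assume H: "range \<sigma> \<subseteq> {x \<in> topspace mtopology. g x \<in> C} \<and> limitin mtopology \<sigma> l sequentially"
      have H1: "range \<sigma> \<subseteq> {x \<in> topspace mtopology. g x \<in> C}" using H by (rule conjunct1)
      have H2: "limitin mtopology \<sigma> l sequentially" using H by (rule conjunct2)
      have lt: "l \<in> topspace mtopology" by (rule limitin_topspace[OF H2])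
      have r: "range \<sigma> \<subseteq> topspace Y" unfolding Yeq using H1 by blast
      have li: "limitin Y \<sigma> l sequentially" unfolding Yeq by (rule H2)
      have lim: "((\<lambda>n. g (\<sigma> n)) \<longlongrightarrow> g l) sequentially" by (rule S[OF r li])
      have "g (\<sigma> n) \<in> C" for n
      proof -
        have "\<sigma> n \<in> range \<sigma>" by (rule rangeI)
        with H1 show ?thesis by blast
      qed
      then have ev: "eventually (\<lambda>n. g (\<sigma> n) \<in> C) sequentially" by (intro always_eventually allI)
      have gl: "g l \<in> C" by (rule Lim_in_closed_set[OF C ev trivial_limit_sequentially lim])
      show "l \<in> {x \<in> topspace mtopology. g x \<in> C}" using lt gl by simp
    qed
  qed
qed

lemma CT_metr:
  fixes \<beta> :: "'e1::topological_space \<Rightarrow> 'e2::topological_space \<Rightarrow> 'f::t2_space"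
  assumes Y: "metrizable_space Y" and SC: "seq_continuous2 \<beta>"
    and h1: "continuous_map Y euclidean h1" and h2: "continuous_map Y euclidean h2"
  shows "continuous_map Y euclidean (\<lambda>p. \<beta> (h1 p) (h2 p))"
proof (rule seq_cont_map[OF Y])
  fix \<sigma> l assume "range \<sigma> \<subseteq> topspace Y" and l: "limitin Y \<sigma> l sequentially"
  have "((\<lambda>n. h1 (\<sigma> n)) \<longlongrightarrow> h1 l) sequentially"
    using continuous_map_limit[OF h1 l] by (simp add: o_def)
  moreover have "((\<lambda>n. h2 (\<sigma> n)) \<longlongrightarrow> h2 l) sequentially"
    using continuous_map_limit[OF h2 l] by (simp add: o_def)
  ultimately have "(\<lambda>n. (h1 (\<sigma> n), h2 (\<sigma> n))) \<longlonglongrightarrow> (h1 l, h2 l)" by (rule tendsto_Pair)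
  from SC[unfolded seq_continuous2_def, rule_format, OF this]
  show "((\<lambda>n. \<beta> (h1 (\<sigma> n)) (h2 (\<sigma> n))) \<longlongrightarrow> \<beta> (h1 l) (h2 l)) sequentially" by simp
qed

context bilin_setup begin

lemma HY_lim:
  assumes hy: "hypocontinuous2 \<beta> S" and K: "K \<in> S"
    and a: "(a \<longlongrightarrow> a0) Fi" and b: "(b \<longlongrightarrow> b0) Fi" and bK: "eventually (\<lambda>i. b i \<in> K) Fi"
  shows "((\<lambda>i. \<beta> (a i) (b i)) \<longlongrightarrow> \<beta> a0 b0) Fi"
proof -
  have d: "((\<lambda>i. a i - a0) \<longlongrightarrow> 0) Fi"
    using op2_tendsto[OF lcs_diff[OF E1] a tendsto_const[of a0]] by simp
  have t1: "((\<lambda>i. \<beta> (a i - a0) (b i)) \<longlongrightarrow> 0) Fi"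
  proof (rule topological_tendstoI)
    fix W :: "'f set" assume W: "open W" "0 \<in> W"
    then obtain V where V: "open V" "0 \<in> V" "\<forall>x\<in>V. \<forall>y\<in>K. \<beta> x y \<in> W"
      using hy K unfolding hypocontinuous2_def by blast
    have "eventually (\<lambda>i. a i - a0 \<in> V) Fi" using topological_tendstoD[OF d V(1,2)] .
    with bK show "eventually (\<lambda>i. \<beta> (a i - a0) (b i) \<in> W) Fi"
      by eventually_elim (use V(3) in blast)
  qed
  have "continuous_on UNIV (\<beta> a0)" using hy unfolding hypocontinuous2_def by blast
  then have "isCont (\<beta> a0) b0" by (simp add: continuous_on_eq_continuous_at)
  from isCont_tendsto_compose[OF this b] have t2: "((\<lambda>i. \<beta> a0 (b i)) \<longlongrightarrow> \<beta> a0 b0) Fi" .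
  have "((\<lambda>i. \<beta> (a i - a0) (b i) + \<beta> a0 (b i)) \<longlongrightarrow> 0 + \<beta> a0 b0) Fi"
    by (rule op2_tendsto[OF lcs_add[OF F] t1 t2])
  moreover have "\<beta> (a i - a0) (b i) + \<beta> a0 (b i) = \<beta> (a i) (b i)" for i
    using b_add1[of "a i - a0" a0 "b i"] by simp
  ultimately show ?thesis by simp
qed

lemma SC_hypo:
  assumes hy: "hypocontinuous2 \<beta> S" and cS: "\<forall>K. compact K \<longrightarrow> K \<in> S"
  shows "seq_continuous2 \<beta>"
  unfolding seq_continuous2_def
proof (intro allI impI)
  fix z :: "nat \<Rightarrow> 'e1 \<times> 'e2" and p assume z: "z \<longlonglongrightarrow> p"
  have a: "(\<lambda>k. fst (z k)) \<longlonglongrightarrow> fst p" using tendsto_fst[OF z] .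
  have b: "(\<lambda>k. snd (z k)) \<longlonglongrightarrow> snd p" using tendsto_snd[OF z] .
  have "compactin euclidean (insert (snd p) (range (\<lambda>k. snd (z k))))"
    by (rule compactin_sequence_with_limit) (use b in auto)
  then have "insert (snd p) (range (\<lambda>k. snd (z k))) \<in> S" using cS by simp
  from HY_lim[OF hy this a b] show "(\<lambda>k. \<beta> (fst (z k)) (snd (z k))) \<longlonglongrightarrow> \<beta> (fst p) (snd p)"
    by simp
qed

lemma JC_hypo:
  assumes hy: "hypocontinuous2 \<beta> S" and K: "K \<in> S"
  shows "continuous_on (UNIV \<times> K) (\<lambda>z. \<beta> (fst z) (snd z))"
  unfolding continuous_on_def
proof
  fix z :: "'e1 \<times> 'e2" assume "z \<in> UNIV \<times> K"
  have a: "(fst \<longlongrightarrow> fst z) (at z within UNIV \<times> K)" by (intro tendsto_fst tendsto_ident_at)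
  have b: "(snd \<longlongrightarrow> snd z) (at z within UNIV \<times> K)" by (intro tendsto_snd tendsto_ident_at)
  have e: "eventually (\<lambda>x. snd x \<in> K) (at z within UNIV \<times> K)"
    unfolding eventually_at_filter by (rule always_eventually) (auto simp: mem_Times_iff)
  show "((\<lambda>z. \<beta> (fst z) (snd z)) \<longlongrightarrow> \<beta> (fst z) (snd z)) (at z within UNIV \<times> K)"
    by (rule HY_lim[OF hy K a b e])
qed

lemma CT_hypo:
  fixes Y :: "'a topology" and h1 :: "'a \<Rightarrow> 'e1" and h2 :: "'a \<Rightarrow> 'e2"
  assumes Y: "k_space Y" and hy: "hypocontinuous2 \<beta> S" and cS: "\<forall>K. compact K \<longrightarrow> K \<in> S"
    and h1: "continuous_map Y euclidean h1" and h2: "continuous_map Y euclidean h2"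
  shows "continuous_map Y euclidean (\<lambda>p. \<beta> (h1 p) (h2 p))"
proof (rule continuous_map_from_k_space[OF Y])
  fix C assume C: "compactin Y C"
  define K where "K = h2 ` C"
  have "compactin euclidean K" unfolding K_def by (rule image_compactin[OF C h2])
  then have KS: "K \<in> S" using cS by simp
  have P: "continuous_map (subtopology Y C) (subtopology euclidean (UNIV \<times> K)) (\<lambda>y. (h1 y, h2 y))"
  proof (rule continuous_map_into_subtopology)
    show "continuous_map (subtopology Y C) euclidean (\<lambda>y. (h1 y, h2 y))"
      using continuous_map_pairedI[OF continuous_map_from_subtopology[OF h1] continuous_map_from_subtopology[OF h2]]
      by simp
    show "(\<lambda>y. (h1 y, h2 y)) \<in> topspace (subtopology Y C) \<rightarrow> UNIV \<times> K"
      by (auto simp: K_def)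
  qed
  have B: "continuous_map (subtopology euclidean (UNIV \<times> K)) euclidean (\<lambda>z. \<beta> (fst z) (snd z))"
    using JC_hypo[OF hy KS] by simp
  from continuous_map_compose[OF P B]
  show "continuous_map (subtopology Y C) euclidean (\<lambda>p. \<beta> (h1 p) (h2 p))" by (simp add: o_def)
qed

end

lemma Xpow_metrizable:
  assumes "metrizable_space (euclidean :: 'x::topological_space topology)"
  shows "metrizable_space (Xpow m :: (nat \<Rightarrow> 'x) topology)"
  unfolding Xpow_def metrizable_space_product_topology
  using assms by (auto intro: countable_finite)

lemma Xpow_k_open:
  assumes "k_inf_space (euclidean :: 'x::topological_space topology)"
    and "openin (Xpow m) V"
  shows "k_space (subtopology (Xpow m :: (nat \<Rightarrow> 'x) topology) V)"
proof (rule k_space_open_subtopology)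
  have H: "Hausdorff_space (euclidean :: 'x topology)" using assms(1) by (simp add: k_inf_space_def)
  show "kc_space (Xpow m) \<or> Hausdorff_space (Xpow m :: (nat \<Rightarrow> 'x) topology) \<or> regular_space (Xpow m :: (nat \<Rightarrow> 'x) topology)"
    using H by (simp add: Xpow_def Hausdorff_space_product_topology)
  show "k_space (Xpow m :: (nat \<Rightarrow> 'x) topology)" using assms(1) by (simp add: k_inf_space_def Xpow_def)
  show "openin (Xpow m) V" by fact
qed

lemma k_inf_k_space:
  assumes "k_inf_space (X :: 'a topology)"
  shows "k_space X"
proof -
  have "\<forall>n::nat. k_space (product_topology (\<lambda>i. X) {..<n})" using assms unfolding k_inf_space_def by (rule conjunct2)
  then have "k_space (product_topology (\<lambda>i. X) {..<1::nat})" by (rule spec)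
  moreover have "{..<1::nat} = {0}" by auto
  ultimately have "k_space (product_topology (\<lambda>i. X) {0::nat})" by simp
  then show ?thesis
    using homeomorphic_k_space[OF homeomorphic_space_singleton_product[of "\<lambda>i::nat. X" 0]] by simp
qed

lemma emb1_open:
  assumes "open U"
  shows "openin (Xpow 1) (emb1 U :: (nat \<Rightarrow> 'x::topological_space) set)"
proof -
  have e: "emb1 U = {p \<in> topspace (Xpow 1). (p::nat \<Rightarrow> 'x) 0 \<in> U}"
    by (simp only: emb1_def topspace_Xpow)
  have c: "continuous_map (Xpow 1) euclidean (\<lambda>p::nat \<Rightarrow> 'x. p 0)"
    unfolding Xpow_def by (rule continuous_map_product_projection) simp
  have "openin euclidean U" using assms open_openin by blast
  from openin_continuous_map_preimage[OF c this] show ?thesis unfolding e .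
qed

theorem theorem2p5:
  fixes s1 :: "'k::real_normed_field \<Rightarrow> 'e1::{ab_group_add,t2_space} \<Rightarrow> 'e1"
    and s2 :: "'k \<Rightarrow> 'e2::{ab_group_add,t2_space} \<Rightarrow> 'e2"
    and sF :: "'k \<Rightarrow> 'f::{ab_group_add,t2_space} \<Rightarrow> 'f"
    and \<beta> :: "'e1 \<Rightarrow> 'e2 \<Rightarrow> 'f"
  assumes E1: "lcs s1" and E2: "lcs s2" and F: "lcs sF"
    and bil: "bilinear_K s1 s2 sF \<beta>"
  shows
    \<comment> \<open>case n = 0: U = X an arbitrary topological space, f continuous\<close>
    "(\<forall>f :: 't::topological_space \<Rightarrow> 'e1 \<times> 'e2.
        continuous_on UNIV f
        \<and> ((metrizable_space (euclidean :: 't topology) \<and> seq_continuous2 \<beta>)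
           \<or> (k_inf_space (euclidean :: 't topology)
              \<and> (\<exists>S. (\<forall>M\<in>S. bounded_K s2 M) \<and> (\<forall>K. compact K \<longrightarrow> K \<in> S)
                     \<and> hypocontinuous2 \<beta> S)))
        \<longrightarrow> continuous_on UNIV (\<lambda>x. \<beta> (fst (f x)) (snd (f x))))
     \<and>
     \<comment> \<open>case n \<ge> 1: X locally convex, U \<subseteq> X open, f of class C^n_K\<close>
     (\<forall>(n::enat) (sX :: 'k \<Rightarrow> 'x::{ab_group_add,t2_space} \<Rightarrow> 'x) (U :: 'x set) (f :: 'x \<Rightarrow> 'e1 \<times> 'e2).
        1 \<le> n \<and> lcs sX \<and> open U \<and> Cn_K sX (prod_scale s1 s2) n U f
        \<and> ((metrizable_space (euclidean :: 'x topology) \<and> seq_continuous2 \<beta>)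
           \<or> (k_inf_space (euclidean :: 'x topology)
              \<and> (\<exists>S. (\<forall>M\<in>S. bounded_K s2 M) \<and> (\<forall>K. compact K \<longrightarrow> K \<in> S)
                     \<and> hypocontinuous2 \<beta> S)))
        \<longrightarrow> Cn_K sX sF n U (\<lambda>x. \<beta> (fst (f x)) (snd (f x))))"
proof -
  interpret bilin_setup s1 s2 sF \<beta>
    using E1 E2 F bil by (simp add: bilin_setup_def)
  have cfst: "continuous_on UNIV (fst :: 'e1 \<times> 'e2 \<Rightarrow> _)" and csnd: "continuous_on UNIV (snd :: 'e1 \<times> 'e2 \<Rightarrow> _)"
    by (intro continuous_intros)+
  have A: "\<forall>f :: 't::topological_space \<Rightarrow> 'e1 \<times> 'e2.
        continuous_on UNIV f
        \<and> ((metrizable_space (euclidean :: 't topology) \<and> seq_continuous2 \<beta>)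
           \<or> (k_inf_space (euclidean :: 't topology)
              \<and> (\<exists>S. (\<forall>M\<in>S. bounded_K s2 M) \<and> (\<forall>K. compact K \<longrightarrow> K \<in> S)
                     \<and> hypocontinuous2 \<beta> S)))
        \<longrightarrow> continuous_on UNIV (\<lambda>x. \<beta> (fst (f x)) (snd (f x)))"
  proof (intro allI impI)
    fix f :: "'t \<Rightarrow> 'e1 \<times> 'e2"
    assume H: "continuous_on UNIV f
        \<and> ((metrizable_space (euclidean :: 't topology) \<and> seq_continuous2 \<beta>)
           \<or> (k_inf_space (euclidean :: 't topology)
              \<and> (\<exists>S. (\<forall>M\<in>S. bounded_K s2 M) \<and> (\<forall>K. compact K \<longrightarrow> K \<in> S)
                     \<and> hypocontinuous2 \<beta> S)))"
    have cf0: "continuous_on UNIV f" using H by (rule conjunct1)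
    have D: "(metrizable_space (euclidean :: 't topology) \<and> seq_continuous2 \<beta>)
           \<or> (k_inf_space (euclidean :: 't topology)
              \<and> (\<exists>S. (\<forall>M\<in>S. bounded_K s2 M) \<and> (\<forall>K. compact K \<longrightarrow> K \<in> S)
                     \<and> hypocontinuous2 \<beta> S))" using H by (rule conjunct2)
    have cf: "continuous_map euclidean euclidean f"
      using cf0 continuous_map_iff_continuous[of UNIV f] by simp
    have c1: "continuous_map euclidean euclidean (\<lambda>x. fst (f x))" by (rule op1_cmap[OF cfst cf])
    have c2: "continuous_map euclidean euclidean (\<lambda>x. snd (f x))" by (rule op1_cmap[OF csnd cf])
    have "continuous_map euclidean euclidean (\<lambda>x. \<beta> (fst (f x)) (snd (f x)))"
    proof (cases "metrizable_space (euclidean :: 't topology) \<and> seq_continuous2 \<beta>")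
      case True
      then show ?thesis using CT_metr[OF _ _ c1 c2] by blast
    next
      case False
      with D have D2: "k_inf_space (euclidean :: 't topology)
              \<and> (\<exists>S. (\<forall>M\<in>S. bounded_K s2 M) \<and> (\<forall>K. compact K \<longrightarrow> K \<in> S)
                     \<and> hypocontinuous2 \<beta> S)" by (meson)
      then obtain S where k: "k_inf_space (euclidean :: 't topology)"
        and cS: "\<forall>K. compact K \<longrightarrow> K \<in> S" and hy: "hypocontinuous2 \<beta> S"
        by blast
      show ?thesis by (rule CT_hypo[OF k_inf_k_space[OF k] hy cS c1 c2])
    qed
    then show "continuous_on UNIV (\<lambda>x. \<beta> (fst (f x)) (snd (f x)))"
      using continuous_map_iff_continuous[of UNIV "\<lambda>x. \<beta> (fst (f x)) (snd (f x))"] by simp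
  qed
  have B: "\<forall>(n::enat) (sX :: 'k \<Rightarrow> 'x::{ab_group_add,t2_space} \<Rightarrow> 'x) (U :: 'x set) (f :: 'x \<Rightarrow> 'e1 \<times> 'e2).
        1 \<le> n \<and> lcs sX \<and> open U \<and> Cn_K sX (prod_scale s1 s2) n U f
        \<and> ((metrizable_space (euclidean :: 'x topology) \<and> seq_continuous2 \<beta>)
           \<or> (k_inf_space (euclidean :: 'x topology)
              \<and> (\<exists>S. (\<forall>M\<in>S. bounded_K s2 M) \<and> (\<forall>K. compact K \<longrightarrow> K \<in> S)
                     \<and> hypocontinuous2 \<beta> S)))
        \<longrightarrow> Cn_K sX sF n U (\<lambda>x. \<beta> (fst (f x)) (snd (f x)))"
  proof (intro allI impI)
    fix n :: enat and sX :: "'k \<Rightarrow> 'x::{ab_group_add,t2_space} \<Rightarrow> 'x" and U :: "'x set" and f :: "'x \<Rightarrow> 'e1 \<times> 'e2"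
    assume H: "1 \<le> n \<and> lcs sX \<and> open U \<and> Cn_K sX (prod_scale s1 s2) n U f
        \<and> ((metrizable_space (euclidean :: 'x topology) \<and> seq_continuous2 \<beta>)
           \<or> (k_inf_space (euclidean :: 'x topology)
              \<and> (\<exists>S. (\<forall>M\<in>S. bounded_K s2 M) \<and> (\<forall>K. compact K \<longrightarrow> K \<in> S)
                     \<and> hypocontinuous2 \<beta> S)))"
    have X: "lcs sX" using H by (elim conjE)
    have U: "open U" using H by (elim conjE)
    have Cn: "Cn_K sX (prod_scale s1 s2) n U f" using H by (elim conjE)
    have D: "(metrizable_space (euclidean :: 'x topology) \<and> seq_continuous2 \<beta>)
           \<or> (k_inf_space (euclidean :: 'x topology)
              \<and> (\<exists>S. (\<forall>M\<in>S. bounded_K s2 M) \<and> (\<forall>K. compact K \<longrightarrow> K \<in> S)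
                     \<and> hypocontinuous2 \<beta> S))" using H by (elim conjE)
    have SCT: "seq_continuous2 \<beta> \<and> (\<forall>m V (g1::(nat\<Rightarrow>'x)\<Rightarrow>'e1) (g2::(nat\<Rightarrow>'x)\<Rightarrow>'e2). openin (Xpow m) V
        \<longrightarrow> continuous_map (subtopology (Xpow m) V) euclidean g1
        \<longrightarrow> continuous_map (subtopology (Xpow m) V) euclidean g2
        \<longrightarrow> continuous_map (subtopology (Xpow m) V) euclidean (\<lambda>p. \<beta> (g1 p) (g2 p)))"
    proof (cases "metrizable_space (euclidean :: 'x topology) \<and> seq_continuous2 \<beta>")
      case True
      then have m: "metrizable_space (euclidean :: 'x topology)" and sc: "seq_continuous2 \<beta>" by blast+
      show ?thesis
      proof (intro conjI allI impI)
        show "seq_continuous2 \<beta>" by (rule sc)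
        fix m V and g1 :: "(nat\<Rightarrow>'x)\<Rightarrow>'e1" and g2 :: "(nat\<Rightarrow>'x)\<Rightarrow>'e2"
        assume o: "openin (Xpow m) V" and c1: "continuous_map (subtopology (Xpow m) V) euclidean g1"
          and c2: "continuous_map (subtopology (Xpow m) V) euclidean g2"
        show "continuous_map (subtopology (Xpow m) V) euclidean (\<lambda>p. \<beta> (g1 p) (g2 p))"
          by (rule CT_metr[OF metrizable_space_subtopology[OF Xpow_metrizable[OF m]] sc c1 c2])
      qed
    next
      case False
      with D have D2: "k_inf_space (euclidean :: 'x topology)
              \<and> (\<exists>S. (\<forall>M\<in>S. bounded_K s2 M) \<and> (\<forall>K. compact K \<longrightarrow> K \<in> S)
                     \<and> hypocontinuous2 \<beta> S)" by (meson)
      then obtain S where k: "k_inf_space (euclidean :: 'x topology)"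
        and cS: "\<forall>K. compact K \<longrightarrow> K \<in> S" and hy: "hypocontinuous2 \<beta> S"
        by blast
      show ?thesis
      proof (intro conjI allI impI)
        show "seq_continuous2 \<beta>" by (rule SC_hypo[OF hy cS])
        fix m V and g1 :: "(nat\<Rightarrow>'x)\<Rightarrow>'e1" and g2 :: "(nat\<Rightarrow>'x)\<Rightarrow>'e2"
        assume o: "openin (Xpow m) V" and c1: "continuous_map (subtopology (Xpow m) V) euclidean g1"
          and c2: "continuous_map (subtopology (Xpow m) V) euclidean g2"
        show "continuous_map (subtopology (Xpow m) V) euclidean (\<lambda>p. \<beta> (g1 p) (g2 p))"
          by (rule CT_hypo[OF Xpow_k_open[OF k o] hy cS c1 c2])
      qed
    qed
    have opn: "openin (Xpow 1) (emb1 U :: (nat \<Rightarrow> 'x) set)" by (rule emb1_open[OF U])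
    have key: "Cnat_K sX sF k 1 (emb1 U) (\<lambda>p. \<beta> (fst (f (p 0))) (snd (f (p 0))))"
      if "Cnat_K sX (prod_scale s1 s2) k 1 (emb1 U) (\<lambda>p. f (p 0))" for k
    proof -
      have P: "Cnat_K sX s1 k 1 (emb1 U) (\<lambda>p. fst (f (p 0))) \<and> Cnat_K sX s2 k 1 (emb1 U) (\<lambda>p. snd (f (p 0)))"
        by (rule Cnat_proj[OF X opn that])
      show ?thesis
        by (rule Cnat_bil[OF X conjunct1[OF SCT] conjunct2[OF SCT, rule_format] opn conjunct1[OF P] conjunct2[OF P]])
    qed
    show "Cn_K sX sF n U (\<lambda>x. \<beta> (fst (f x)) (snd (f x)))"
    proof (cases n)
      case (enat k)
      have "Cnat_K sX (prod_scale s1 s2) k 1 (emb1 U) (\<lambda>p. f (p 0))" using Cn unfolding Cn_K_def enat by simp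
      from key[OF this] show ?thesis unfolding Cn_K_def enat using U by simp
    next
      case infinity
      have "\<forall>k. Cnat_K sX (prod_scale s1 s2) k 1 (emb1 U) (\<lambda>p. f (p 0))" using Cn unfolding Cn_K_def infinity by simp
      then have "\<forall>k. Cnat_K sX sF k 1 (emb1 U) (\<lambda>p. \<beta> (fst (f (p 0))) (snd (f (p 0))))" using key by blast
      then show ?thesis unfolding Cn_K_def infinity using U by simp
    qed
  qed
  show ?thesis by (rule conjI[OF A B])
qed

end
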